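(* Let $B=[\mathbf a_1\ \cdots\ \mathbf a_n]$ be an $m\times n$ integer matrix with columns $\mathbf a_i$ such that $\mathbf a_1=\mathbf a_2$, and let $H=\ker(B)\cap\mathbb N_0^n$. Let $B'=[\mathbf a_1\ \mathbf a_3\ \cdots\ \mathbf a_n]$ and $H'=\ker(B')\cap\mathbb N_0^{n-1}$. Then there is a transfer homomorphism $\theta\colon H\to H'$.
   Context: $H$ and $H'$ are monoids under addition. A transfer homomorphism between reduced atomic monoids $H\to T$ is a surjective monoid homomorphism $\theta$ with $\theta^{-1}(0)=\{0\}$ such that whenever $\theta(a)=s+t$ with $s,t\in T$, there exist $b,c\in H$ with $a=b+c$, $\theta(b)=s$, $\theta(c)=t$. *)

theory Defs
  imports Main "HOL-Library.Function_Algebras"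
begin

text \<open>An m x n integer matrix is represented as B :: nat => nat => int (entry B i j, i < m, j < n).
  Vectors in N_0^n are functions x :: nat => nat vanishing outside {0..<n}, so that addition
  is pointwise and 0 is the zero vector.\<close>

definition kermon :: "nat \<Rightarrow> nat \<Rightarrow> (nat \<Rightarrow> nat \<Rightarrow> int) \<Rightarrow> (nat \<Rightarrow> nat) set" where
  "kermon m n B = {x. (\<forall>j\<ge>n. x j = 0) \<and> (\<forall>i<m. (\<Sum>j<n. B i j * int (x j)) = 0)}"

definition del_col1 :: "(nat \<Rightarrow> nat \<Rightarrow> int) \<Rightarrow> (nat \<Rightarrow> nat \<Rightarrow> int)" where
  "del_col1 B = (\<lambda>i j. if j = 0 then B i 0 else B i (Suc j))"

definition transfer_hom :: "('a::monoid_add) set \<Rightarrow> ('b::monoid_add) set \<Rightarrow> ('a \<Rightarrow> 'b) \<Rightarrow> bool" where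
  "transfer_hom H T \<theta> \<longleftrightarrow>
     (\<forall>a\<in>H. \<forall>b\<in>H. \<theta> (a + b) = \<theta> a + \<theta> b) \<and> \<theta> 0 = 0 \<and>
     \<theta> ` H = T \<and>
     {a\<in>H. \<theta> a = 0} = {0} \<and>
     (\<forall>a\<in>H. \<forall>s\<in>T. \<forall>t\<in>T. \<theta> a = s + t \<longrightarrow>
        (\<exists>b\<in>H. \<exists>c\<in>H. a = b + c \<and> \<theta> b = s \<and> \<theta> c = t))"

end

theory Submission
  imports Defs
begin

definition th :: "(nat \<Rightarrow> nat) \<Rightarrow> (nat \<Rightarrow> nat)" where
  "th x = (\<lambda>j. if j = 0 then x 0 + x 1 else x (Suc j))"

lemma sum_eq:
  fixes B :: "nat \<Rightarrow> nat \<Rightarrow> int"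
  assumes "B i 0 = B i 1"
  shows "(\<Sum>j<Suc (Suc k). B i j * int (x j)) = (\<Sum>j<Suc k. del_col1 B i j * int (th x j))"
proof -
  have "(\<Sum>j<Suc (Suc k). B i j * int (x j)) = B i 0 * int (x 0) + (B i 1 * int (x 1) + (\<Sum>j<k. B i (Suc (Suc j)) * int (x (Suc (Suc j)))))"
    by (simp only: sum.lessThan_Suc_shift) simp
  moreover have "(\<Sum>j<Suc k. del_col1 B i j * int (th x j)) = B i 0 * int (x 0 + x 1) + (\<Sum>j<k. B i (Suc (Suc j)) * int (x (Suc (Suc j))))"
  proof -
    have c: "(\<Sum>j<k. del_col1 B i (Suc j) * int (th x (Suc j))) = (\<Sum>j<k. B i (Suc (Suc j)) * int (x (Suc (Suc j))))"
      by (rule sum.cong) (simp_all add: del_col1_def th_def)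
    have "(\<Sum>j<Suc k. del_col1 B i j * int (th x j)) = del_col1 B i 0 * int (th x 0) + (\<Sum>j<k. del_col1 B i (Suc j) * int (th x (Suc j)))"
      by (rule sum.lessThan_Suc_shift)
    also have "\<dots> = B i 0 * int (x 0 + x 1) + (\<Sum>j<k. B i (Suc (Suc j)) * int (x (Suc (Suc j))))"
      using c by (simp add: del_col1_def th_def)
    finally show ?thesis .
  qed
  ultimately show ?thesis using assms by (simp add: algebra_simps)
qed

lemma key:
  fixes B :: "nat \<Rightarrow> nat \<Rightarrow> int"
  assumes "n = Suc (Suc k)" "\<forall>i<m. B i 0 = B i 1" "\<forall>j\<ge>n. x j = 0"
  shows "x \<in> kermon m n B \<longleftrightarrow> th x \<in> kermon m (n - 1) (del_col1 B)"
proof -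
  have s: "\<forall>j\<ge>n-1. th x j = 0" using assms(1,3) by (simp add: th_def)
  show ?thesis using assms s sum_eq[of B] unfolding kermon_def by auto
qed

theorem lemma3p15:
  fixes m n :: nat and B :: "nat \<Rightarrow> nat \<Rightarrow> int"
  assumes "n \<ge> 2"
    and "\<forall>i<m. B i 0 = B i 1"
  shows "\<exists>\<theta> :: (nat \<Rightarrow> nat) \<Rightarrow> (nat \<Rightarrow> nat).
           transfer_hom (kermon m n B) (kermon m (n - 1) (del_col1 B)) \<theta>"
proof -
  obtain k where n: "n = Suc (Suc k)" using assms(1) by (metis add_2_eq_Suc le_Suc_ex)
  let ?H = "kermon m n B" and ?T = "kermon m (n - 1) (del_col1 B)"
  have K: "\<And>x. \<forall>j\<ge>n. x j = 0 \<Longrightarrow> x \<in> ?H \<longleftrightarrow> th x \<in> ?T"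
    using key[OF n assms(2)] by blast
  have supp: "\<And>x. x \<in> ?H \<Longrightarrow> \<forall>j\<ge>n. x j = 0" by (simp add: kermon_def)
  have suppT: "\<And>y j. y \<in> ?T \<Longrightarrow> j \<ge> n - 1 \<Longrightarrow> y j = 0" by (simp add: kermon_def)
  have hom: "\<forall>a\<in>?H. \<forall>b\<in>?H. th (a + b) = th a + th b"
    by (auto simp: th_def fun_eq_iff)
  have z: "th 0 = 0" by (simp add: th_def fun_eq_iff)
  have img: "th ` ?H = ?T"
  proof
    show "th ` ?H \<subseteq> ?T" using K supp by blast
  next
    show "?T \<subseteq> th ` ?H"
    proof
      fix y assume y: "y \<in> ?T"
      define x where "x = (\<lambda>j. if j = 0 then y 0 else if j = 1 then 0 else y (j - 1))"
      have tx: "th x = y" by (auto simp: x_def th_def fun_eq_iff)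
      have sx: "\<forall>j\<ge>n. x j = 0" using suppT[OF y] n by (auto simp: x_def)
      have "x \<in> ?H" using K[OF sx] tx y by simp
      then show "y \<in> th ` ?H" using tx by blast
    qed
  qed
  have ker: "{a\<in>?H. th a = 0} = {0}"
  proof -
    have "\<And>a. th a = 0 \<Longrightarrow> a = 0"
    proof -
      fix a :: "nat \<Rightarrow> nat" assume "th a = 0"
      then have h: "\<And>j. th a j = 0" by simp
      show "a = 0"
      proof
        fix j show "a j = 0 j"
          using h[of 0] h[of "j - 1"] by (cases j; cases "j - 1") (auto simp: th_def split: if_splits)
      qed
    qed
    moreover have "(0::nat\<Rightarrow>nat) \<in> ?H" by (simp add: kermon_def)
    ultimately show ?thesis using z by auto
  qed
  have tr: "\<forall>a\<in>?H. \<forall>s\<in>?T. \<forall>t\<in>?T. th a = s + t \<longrightarrow>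
        (\<exists>b\<in>?H. \<exists>c\<in>?H. a = b + c \<and> th b = s \<and> th c = t)"
  proof (intro ballI impI)
    fix a s t assume a: "a \<in> ?H" and s: "s \<in> ?T" and t: "t \<in> ?T" and e: "th a = s + t"
    have e0: "a 0 + a 1 = s 0 + t 0" using fun_cong[OF e, of 0] by (simp add: th_def)
    have ej: "a (Suc j) = s j + t j" if "j \<ge> 1" for j
      using fun_cong[OF e, of j] that by (simp add: th_def)
    define b where "b = (\<lambda>j. if j = 0 then min (a 0) (s 0) else if j = 1 then s 0 - min (a 0) (s 0) else s (j - 1))"
    define c where "c = (\<lambda>j. if j = 0 then a 0 - min (a 0) (s 0) else if j = 1 then a 1 - (s 0 - min (a 0) (s 0)) else t (j - 1))"
    have abc: "a = b + c"
    proof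
      fix j show "a j = (b + c) j"
      proof (cases "j \<le> 1")
        case True then show ?thesis using e0 by (cases j) (auto simp: b_def c_def)
      next
        case False
        then obtain i where "j = Suc i" "i \<ge> 1" by (cases j) auto
        then show ?thesis using ej[of i] by (auto simp: b_def c_def)
      qed
    qed
    have tb: "th b = s" by (auto simp: b_def th_def fun_eq_iff)
    have tc: "th c = t" using e0 by (auto simp: c_def th_def fun_eq_iff)
    have sb: "\<forall>j\<ge>n. b j = 0" using suppT[OF s] n by (auto simp: b_def)
    have sc: "\<forall>j\<ge>n. c j = 0" using suppT[OF t] n by (auto simp: c_def)
    have "b \<in> ?H" using K[OF sb] tb s by simp
    moreover have "c \<in> ?H" using K[OF sc] tc t by simp
    ultimately show "\<exists>b\<in>?H. \<exists>c\<in>?H. a = b + c \<and> th b = s \<and> th c = t" using abc tb tc by blast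
  qed
  show ?thesis unfolding transfer_hom_def using hom z img ker tr by blast
qed

end
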